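(* Let $f(\bar u)=h(\tilde x(\bar u))+g(\bar u)$ and $c_f$ be as in the context. Let $\bar u_0\in\mathbb{R}^{\tau p}$ and let $0<\gamma_{\min}\le\gamma_{\max}$. Consider the regularized Gauss–Newton iterates $$\bar u_{k+1}=\bar u_k+\operatorname{argmin}_{\bar v\in\mathbb{R}^{\tau p}}\Big\{c_f(\bar u_k+\bar v;\bar u_k)+\tfrac{1}{2\gamma_k}\|\bar v\|_2^2\Big\},$$ where the step sizes satisfy $\gamma_{\min}\le\gamma_k\le\gamma_{\max}$ and the sufficient decrease condition $$f(\bar u_{k+1})\le c_f(\bar u_{k+1};\bar u_k)+\tfrac{1}{2\gamma_k}\|\bar u_{k+1}-\bar u_k\|_2^2.$$ Then the objective values $f(\bar u_k)$ decrease over the iterations and for every $N\ge0$, $$\min_{k=0,\ldots,N}\|\nabla f(\bar u_k)\|^2\le\frac{2L(f(\bar u_0)-f^* )}{N+1},$$ where $L=\max_{\gamma\in[\gamma_{\min},\gamma_{\max}]}\gamma(\ell_{\tilde x,S}^2L_h+L_g+\gamma^{-1})^2$ and $f^*=\lim_{k\to\infty}f(\bar u_k)$.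
   Context: Let $h:\mathbb{R}^{\tau d}\to\mathbb{R}$ and $g:\mathbb{R}^{\tau p}\to\mathbb{R}$ be convex quadratic functions with smoothness constants $L_h$, $L_g$ (Lipschitz constants of their gradients), and $\tilde x:\mathbb{R}^{\tau p}\to\mathbb{R}^{\tau d}$ differentiable with continuous gradients; $f(\bar u)=h(\tilde x(\bar u))+g(\bar u)$. For differentiable $F:\mathbb{R}^n\to\mathbb{R}^m$, $\nabla F(z)\in\mathbb{R}^{n\times m}$ is the transposed Jacobian. The convex model is $c_f(\bar u+\bar v;\bar u)=h(\tilde x(\bar u)+\nabla\tilde x(\bar u)^\top\bar v)+g(\bar u+\bar v)$. $S=\{\bar u:f(\bar u)\le f(\bar u_0)\}$ is the initial sub-level set and $\ell_{\tilde x,S}$ the Lipschitz constant of $\tilde x$ on $S$. *)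

theory Defs
  imports "HOL-Analysis.Analysis"
begin

definition convex_quadratic :: "('a::euclidean_space \<Rightarrow> real) \<Rightarrow> bool" where
  "convex_quadratic q \<longleftrightarrow>
     (\<exists>Q b c. linear Q \<and> (\<forall>x y. Q x \<bullet> y = x \<bullet> Q y) \<and> (\<forall>x. 0 \<le> x \<bullet> Q x) \<and>
              (\<forall>x. q x = (1/2) * (x \<bullet> Q x) + b \<bullet> x + c))"

definition is_gradient :: "('a::euclidean_space \<Rightarrow> real) \<Rightarrow> ('a \<Rightarrow> 'a) \<Rightarrow> bool" where
  "is_gradient F G \<longleftrightarrow> (\<forall>x. (F has_derivative (\<lambda>v. G x \<bullet> v)) (at x))"

text \<open>Convex model c_f(w; u) = h(x(u) + Dx(u)(w - u)) + g(w), where Dx(u) is the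
  derivative (Jacobian) of x at u, i.e. Dx(u) v = (nabla x(u))^T v.\<close>
definition conv_model ::
  "('x::euclidean_space \<Rightarrow> real) \<Rightarrow> ('u::euclidean_space \<Rightarrow> real) \<Rightarrow> ('u \<Rightarrow> 'x)
    \<Rightarrow> ('u \<Rightarrow> ('u \<Rightarrow>\<^sub>L 'x)) \<Rightarrow> 'u \<Rightarrow> 'u \<Rightarrow> real" where
  "conv_model h g xt Dx w u = h (xt u + blinfun_apply (Dx u) (w - u)) + g w"

end

theory Submission
  imports Defs
begin


lemma grad_unique:
  fixes G :: "'a::euclidean_space \<Rightarrow> 'a"
  assumes "is_gradient F G" "(F has_derivative (\<lambda>v. a \<bullet> v)) (at x)"
  shows "G x = a"
proof -
  have "(\<lambda>v. G x \<bullet> v) = (\<lambda>v. a \<bullet> v)"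
    using has_derivative_unique assms unfolding is_gradient_def by blast
  then have "G x \<bullet> (G x - a) = a \<bullet> (G x - a)" by metis
  then have "(G x - a) \<bullet> (G x - a) = 0" by (simp add: inner_diff_left)
  then show ?thesis by simp
qed

lemma quad_expand:
  fixes q :: "'a::euclidean_space \<Rightarrow> real"
  assumes "convex_quadratic q" "is_gradient q G"
  shows "\<exists>Q. (\<forall>z. 0 \<le> z \<bullet> Q z) \<and>
     (\<forall>y z t. q (y + t *\<^sub>R z) = q y + t * (G y \<bullet> z) + t\<^sup>2 / 2 * (z \<bullet> Q z))"
proof -
  obtain Q b c where lin: "linear Q" and sym: "\<forall>x y. Q x \<bullet> y = x \<bullet> Q y"
    and psd: "\<forall>x. 0 \<le> x \<bullet> Q x" and qd: "\<forall>x. q x = (1/2) * (x \<bullet> Q x) + b \<bullet> x + c"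
    using assms(1) unfolding convex_quadratic_def by blast
  have qf: "q = (\<lambda>x. (1/2) * (x \<bullet> Q x) + b \<bullet> x + c)" using qd by auto
  have bl: "bounded_linear Q" using lin by (simp add: linear_conv_bounded_linear)
  have G: "G x = Q x + b" for x
  proof (rule grad_unique[OF assms(2)])
    have d: "(q has_derivative (\<lambda>v. (1/2) * (x \<bullet> Q v + v \<bullet> Q x) + b \<bullet> v)) (at x)"
      unfolding qf
      by (auto intro!: derivative_eq_intros bounded_linear.has_derivative[OF bl])
    have e: "(\<lambda>v. (1/2) * (x \<bullet> Q v + v \<bullet> Q x) + b \<bullet> v) = (\<lambda>v. (Q x + b) \<bullet> v)"
      using sym by (auto simp: inner_add_left inner_add_right inner_commute)
    show "(q has_derivative (\<lambda>v. (Q x + b) \<bullet> v)) (at x)" using d e by simp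
  qed
  have "q (y + t *\<^sub>R z) = q y + t * (G y \<bullet> z) + t\<^sup>2 / 2 * (z \<bullet> Q z)" for y z t
  proof -
    have Qa: "Q (y + t *\<^sub>R z) = Q y + t *\<^sub>R Q z"
      using lin by (simp add: linear_add linear_scale)
    have s: "y \<bullet> Q z = Q y \<bullet> z" using sym by simp
    show ?thesis unfolding qf G Qa
      by (simp add: inner_add_left inner_add_right s power2_eq_square algebra_simps inner_commute)
  qed
  then show ?thesis using psd by blast
qed

lemma deriv_bound_neg:
  fixes F :: "'a::euclidean_space \<Rightarrow> real" and X :: "'a \<Rightarrow> 'b::euclidean_space"
  assumes dF: "(F has_derivative (\<lambda>v. n \<bullet> v)) (at x)"
    and dX: "(X has_derivative A) (at x)"
    and lip: "ell-lipschitz_on {w. F w \<le> F x} X"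
    and nw: "n \<bullet> w < 0"
  shows "norm (A w) \<le> ell * norm w"
proof -
  have w0: "w \<noteq> 0" using nw by auto
  then have nwp: "norm w > 0" by simp
  have blA: "bounded_linear A" using dX has_derivative_bounded_linear by blast
  show ?thesis
  proof (rule field_le_epsilon)
    fix e :: real assume e: "0 < e"
    define e1 where "e1 = - (n \<bullet> w) / (2 * norm w)"
    have e1p: "e1 > 0" unfolding e1_def using nw nwp by (simp add: divide_neg_pos)
    obtain d1 where d1: "d1 > 0" and
      D1: "\<forall>y. norm (y - x) < d1 \<longrightarrow> norm (F y - F x - n \<bullet> (y - x)) \<le> e1 * norm (y - x)"
      using dF e1p unfolding has_derivative_at_alt by blast
    have e2p: "e / norm w > 0" using e nwp by simp
    obtain d2 where d2: "d2 > 0" and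
      D2: "\<forall>y. norm (y - x) < d2 \<longrightarrow> norm (X y - X x - A (y - x)) \<le> (e / norm w) * norm (y - x)"
      using dX e2p unfolding has_derivative_at_alt by blast
    define t where "t = min d1 d2 / (2 * norm w)"
    have tp: "t > 0" unfolding t_def using d1 d2 nwp by simp
    define y where "y = x + t *\<^sub>R w"
    have yx: "y - x = t *\<^sub>R w" unfolding y_def by simp
    have ny: "norm (y - x) = t * norm w" unfolding yx using tp by simp
    have lt: "t * norm w < min d1 d2" unfolding t_def using d1 d2 nwp by (simp add: min_def)
    have h1: "norm (F y - F x - t * (n \<bullet> w)) \<le> e1 * (t * norm w)"
    proof -
      have "norm (y - x) < d1" using ny lt by simp
      then have "norm (F y - F x - n \<bullet> (y - x)) \<le> e1 * norm (y - x)" using D1 by blast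
      moreover have "n \<bullet> (y - x) = t * (n \<bullet> w)" by (simp add: yx)
      ultimately show ?thesis by (simp only: ny)
    qed
    have "e1 * (t * norm w) = - t * (n \<bullet> w) / 2" unfolding e1_def using nwp by (simp add: field_simps)
    moreover have "F y - F x - t * (n \<bullet> w) \<le> e1 * (t * norm w)"
      using h1 abs_le_D1 unfolding real_norm_def by blast
    ultimately have "F y \<le> F x + t * (n \<bullet> w) / 2" by linarith
    moreover have "t * (n \<bullet> w) < 0" using tp nw by (simp add: mult_pos_neg)
    ultimately have yS: "y \<in> {w. F w \<le> F x}" by simp
    have xS: "x \<in> {w. F w \<le> F x}" by simp
    have L: "norm (X y - X x) \<le> ell * (t * norm w)"
      using lipschitz_onD[OF lip yS xS] ny by (simp add: dist_norm)
    have At: "A (y - x) = t *\<^sub>R A w" unfolding yx using blA by (simp add: linear_simps)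
    have h2: "norm (X y - X x - t *\<^sub>R A w) \<le> e * t"
    proof -
      have "norm (y - x) < d2" using ny lt by simp
      then have "norm (X y - X x - A (y - x)) \<le> (e / norm w) * norm (y - x)" using D2 by blast
      moreover have "(e / norm w) * (t * norm w) = e * t" using nwp by simp
      ultimately show ?thesis by (simp only: ny At)
    qed
    have "t * norm (A w) = norm (t *\<^sub>R A w)" using tp by simp
    also have "\<dots> \<le> norm (X y - X x) + norm (X y - X x - t *\<^sub>R A w)"
      by (metis norm_triangle_sub add.commute norm_minus_commute)
    also have "\<dots> \<le> ell * (t * norm w) + e * t" using L h2 by simp
    finally have "t * norm (A w) \<le> t * (ell * norm w + e)" by (simp add: algebra_simps)
    then show "norm (A w) \<le> ell * norm w + e" using tp by simp
  qed
qed

lemma deriv_bound: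
  fixes F :: "'a::euclidean_space \<Rightarrow> real" and X :: "'a \<Rightarrow> 'b::euclidean_space"
  assumes dF: "(F has_derivative (\<lambda>v. n \<bullet> v)) (at x)" and n0: "n \<noteq> 0"
    and dX: "(X has_derivative A) (at x)"
    and lip: "ell-lipschitz_on {w. F w \<le> F x} X"
  shows "norm (A w) \<le> ell * norm w"
proof -
  have blA: "bounded_linear A" using dX has_derivative_bounded_linear by blast
  have ell0: "0 \<le> ell" using lipschitz_on_nonneg[OF lip] .
  have neg: "norm (A z) \<le> ell * norm z" if "n \<bullet> z < 0" for z
    using deriv_bound_neg[OF dF dX lip that] .
  consider "n \<bullet> w < 0" | "n \<bullet> w > 0" | "n \<bullet> w = 0" by linarith
  then show ?thesis
  proof cases
    case 1 then show ?thesis using neg by blast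
  next
    case 2
    then have "n \<bullet> (- w) < 0" by simp
    then have "norm (A (- w)) \<le> ell * norm (- w)" using neg by blast
    moreover have "A (- w) = - A w" using blA by (simp add: linear_simps)
    ultimately show ?thesis by simp
  next
    case 3
    have nn: "n \<bullet> n > 0" using n0 by simp
    show ?thesis
    proof (rule field_le_epsilon)
      fix e :: real assume e: "0 < e"
      define c where "c = ell * norm n + norm (A n) + 1"
      have cp: "c > 0" unfolding c_def using ell0 by (simp add: add_nonneg_pos)
      define s where "s = e / c"
      have sp: "s > 0" unfolding s_def using e cp by simp
      have "n \<bullet> (w - s *\<^sub>R n) = - s * (n \<bullet> n)" using 3 by (simp add: inner_diff_right)
      also have "\<dots> < 0" using sp nn by (simp add: mult_pos_pos)
      finally have "norm (A (w - s *\<^sub>R n)) \<le> ell * norm (w - s *\<^sub>R n)" using neg by blast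
      moreover have "A (w - s *\<^sub>R n) = A w - s *\<^sub>R A n" using blA by (simp add: linear_simps)
      ultimately have a: "norm (A w - s *\<^sub>R A n) \<le> ell * norm (w - s *\<^sub>R n)" by simp
      have b: "norm (w - s *\<^sub>R n) \<le> norm w + s * norm n"
        using norm_triangle_ineq4[of w "s *\<^sub>R n"] sp by simp
      have c: "norm (A w) \<le> norm (A w - s *\<^sub>R A n) + s * norm (A n)"
        using norm_triangle_ineq[of "A w - s *\<^sub>R A n" "s *\<^sub>R A n"] sp by simp
      have "norm (A w) \<le> ell * (norm w + s * norm n) + s * norm (A n)"
        using a b c ell0 mult_left_mono[OF b ell0] by linarith
      also have "\<dots> = ell * norm w + s * (c - 1)" unfolding c_def by (simp add: algebra_simps)
      also have "\<dots> \<le> ell * norm w + s * c" using sp by simp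
      also have "s * c = e" unfolding s_def using cp by simp
      finally show "norm (A w) \<le> ell * norm w + e" .
    qed
  qed
qed

lemma quad_nonneg_zero:
  fixes a b :: real
  assumes "\<And>t. 0 \<le> t * a + t\<^sup>2 * b" and "0 \<le> b"
  shows "a = 0"
proof -
  define t where "t = - a / (b + 1)"
  have bp: "b + 1 > 0" using assms(2) by simp
  have e: "t * (b + 1) = - a" unfolding t_def using bp by simp
  then have tb: "t * b = - a - t" by (simp add: algebra_simps)
  have "t * a + t\<^sup>2 * b = t * a + t * (t * b)" by (simp add: power2_eq_square)
  also have "\<dots> = - (t\<^sup>2)" unfolding tb by (simp add: algebra_simps power2_eq_square)
  finally have "0 \<le> - (t\<^sup>2)" using assms(1)[of t] by simp
  then have "t = 0" by simp
  then show ?thesis using e by simp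
qed

lemma norm_add_sq:
  fixes v d :: "'a::real_inner"
  shows "(norm (v + t *\<^sub>R d))\<^sup>2 = (norm v)\<^sup>2 + 2 * t * (v \<bullet> d) + t\<^sup>2 * (norm d)\<^sup>2"
  apply (simp only: power2_norm_eq_inner)
  apply (simp add: inner_add_left inner_add_right inner_commute power2_eq_square algebra_simps)
  done

lemma f_gradient:
  fixes h :: "'x::euclidean_space \<Rightarrow> real" and g :: "'u::euclidean_space \<Rightarrow> real"
    and xt :: "'u \<Rightarrow> 'x" and Dx :: "'u \<Rightarrow> ('u \<Rightarrow>\<^sub>L 'x)"
  assumes h_grad: "is_gradient h grad_h" and g_grad: "is_gradient g grad_g"
    and xt_deriv: "\<And>w. (xt has_derivative blinfun_apply (Dx w)) (at w)"
    and f_def: "\<And>w. f w = h (xt w) + g w"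
    and f_grad: "is_gradient f grad_f"
  shows "grad_f w \<bullet> d = grad_h (xt w) \<bullet> Dx w d + grad_g w \<bullet> d"
proof -
  have ff: "f = (\<lambda>w. h (xt w) + g w)" using f_def by auto
  have "((\<lambda>w. h (xt w) + g w) has_derivative (\<lambda>d. grad_h (xt w) \<bullet> Dx w d + grad_g w \<bullet> d)) (at w)"
    apply (rule has_derivative_add)
     apply (rule has_derivative_compose[OF xt_deriv, where g=h and g'="\<lambda>v. grad_h (xt w) \<bullet> v"])
     using h_grad g_grad unfolding is_gradient_def by auto
  then have "(\<lambda>d. grad_f w \<bullet> d) = (\<lambda>d. grad_h (xt w) \<bullet> Dx w d + grad_g w \<bullet> d)"
    using has_derivative_unique f_grad unfolding is_gradient_def ff by blast
  then show ?thesis by metis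
qed
theorem proposition7:
  fixes h :: "'x::euclidean_space \<Rightarrow> real"
    and g :: "'u::euclidean_space \<Rightarrow> real"
    and xt :: "'u \<Rightarrow> 'x"
    and Dx :: "'u \<Rightarrow> ('u \<Rightarrow>\<^sub>L 'x)"
    and grad_h :: "'x \<Rightarrow> 'x" and grad_g :: "'u \<Rightarrow> 'u" and grad_f :: "'u \<Rightarrow> 'u"
    and f :: "'u \<Rightarrow> real"
    and Lh Lg ell gmin gmax :: real
    and u :: "nat \<Rightarrow> 'u" and \<gamma> :: "nat \<Rightarrow> real"
  assumes h_quad: "convex_quadratic h" and g_quad: "convex_quadratic g"
    and h_grad: "is_gradient h grad_h" and Lh: "Lh-lipschitz_on UNIV grad_h"
    and g_grad: "is_gradient g grad_g" and Lg: "Lg-lipschitz_on UNIV grad_g"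
    and xt_deriv: "\<And>w. (xt has_derivative blinfun_apply (Dx w)) (at w)"
    and Dx_cont: "continuous_on UNIV Dx"
    and f_def: "\<And>w. f w = h (xt w) + g w"
    and f_grad: "is_gradient f grad_f"
    and ell: "ell-lipschitz_on {w. f w \<le> f (u 0)} xt"
    and gmin_pos: "0 < gmin" and gmin_le: "gmin \<le> gmax"
    and gamma_bounds: "\<And>k. gmin \<le> \<gamma> k \<and> \<gamma> k \<le> gmax"
    and step: "\<And>k. is_arg_min
                 (\<lambda>v. conv_model h g xt Dx (u k + v) (u k) + (1 / (2 * \<gamma> k)) * (norm v)\<^sup>2)
                 (\<lambda>_. True) (u (Suc k) - u k)"
    and suff_decrease: "\<And>k. f (u (Suc k))
                 \<le> conv_model h g xt Dx (u (Suc k)) (u k)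
                    + (1 / (2 * \<gamma> k)) * (norm (u (Suc k) - u k))\<^sup>2"
  shows "decseq (\<lambda>k. f (u k)) \<and>
         (\<forall>fstar N. ((\<lambda>k. f (u k)) \<longlonglongrightarrow> fstar) \<longrightarrow>
            Min ((\<lambda>k. (norm (grad_f (u k)))\<^sup>2) ` {0..N})
              \<le> 2 * (SUP t\<in>{gmin..gmax}. t * (ell\<^sup>2 * Lh + Lg + 1 / t)\<^sup>2)
                  * (f (u 0) - fstar) / (real N + 1))"
  proof -
  obtain Qh where Qh_psd: "\<forall>z. 0 \<le> z \<bullet> Qh z"
    and Qh: "\<forall>y z t. h (y + t *\<^sub>R z) = h y + t * (grad_h y \<bullet> z) + t\<^sup>2 / 2 * (z \<bullet> Qh z)"
    using quad_expand[OF h_quad h_grad] by blast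
  obtain Qg where Qg_psd: "\<forall>z. 0 \<le> z \<bullet> Qg z"
    and Qg: "\<forall>y z t. g (y + t *\<^sub>R z) = g y + t * (grad_g y \<bullet> z) + t\<^sup>2 / 2 * (z \<bullet> Qg z)"
    using quad_expand[OF g_quad g_grad] by blast
  have fg: "\<And>w d. grad_f w \<bullet> d = grad_h (xt w) \<bullet> Dx w d + grad_g w \<bullet> d"
    using f_gradient[OF h_grad g_grad xt_deriv f_def f_grad] by blast
  have Lh0: "0 \<le> Lh" using lipschitz_on_nonneg[OF Lh] .
  have Lg0: "0 \<le> Lg" using lipschitz_on_nonneg[OF Lg] .
  have ell0: "0 \<le> ell" using lipschitz_on_nonneg[OF ell] .
  define K where "K = (\<lambda>k. ell\<^sup>2 * Lh + Lg + 1 / \<gamma> k)"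
  have core: "(norm (u (Suc k) - u k))\<^sup>2 / (2 * \<gamma> k) \<le> f (u k) - f (u (Suc k)) \<and>
     (grad_f (u k) \<noteq> 0 \<longrightarrow> f (u k) \<le> f (u 0) \<longrightarrow>
        norm (grad_f (u k)) \<le> K k * norm (u (Suc k) - u k))" for k
  proof -
    define A where "A = blinfun_apply (Dx (u k))"
    define x0 where "x0 = xt (u k)"
    define v where "v = u (Suc k) - u k"
    define gk where "gk = \<gamma> k"
    have gk: "gk > 0" unfolding gk_def using gamma_bounds[of k] gmin_pos by linarith
    define \<phi> where "\<phi> = (\<lambda>w. conv_model h g xt Dx (u k + w) (u k) + (1 / (2 * gk)) * (norm w)\<^sup>2)"
    define Gd where "Gd = (\<lambda>d. grad_h (x0 + A v) \<bullet> A d + grad_g (u k + v) \<bullet> d + (v \<bullet> d) / gk)"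
    define R where "R = (\<lambda>d. (A d \<bullet> Qh (A d)) / 2 + (d \<bullet> Qg d) / 2 + (norm d)\<^sup>2 / (2 * gk))"
    have R_ge: "R d \<ge> (norm d)\<^sup>2 / (2 * gk)" for d
      unfolding R_def using Qh_psd Qg_psd by (simp add: add_nonneg_nonneg)
    have R0: "R d \<ge> 0" for d using R_ge[of d] gk
      by (meson divide_nonneg_pos order_trans zero_le_power2 zero_less_mult_iff zero_less_numeral)
    have expand: "\<phi> (v + t *\<^sub>R d) = \<phi> v + t * Gd d + t\<^sup>2 * R d" for t d
    proof -
      have a1: "A (v + t *\<^sub>R d) = A v + t *\<^sub>R A d"
        unfolding A_def by (simp add: blinfun.add_right blinfun.scaleR_right)
      have hx: "h (x0 + A (v + t *\<^sub>R d)) = h (x0 + A v) + t * (grad_h (x0 + A v) \<bullet> A d)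
          + t\<^sup>2 / 2 * (A d \<bullet> Qh (A d))"
        using Qh[rule_format, of "x0 + A v" t "A d"] unfolding a1 by (simp add: add.assoc)
      have gx: "g (u k + (v + t *\<^sub>R d)) = g (u k + v) + t * (grad_g (u k + v) \<bullet> d)
          + t\<^sup>2 / 2 * (d \<bullet> Qg d)"
        using Qg[rule_format, of "u k + v" t d] by (simp add: add.assoc)
      have phi: "\<phi> w = h (x0 + A w) + g (u k + w) + (1 / (2 * gk)) * (norm w)\<^sup>2" for w
        unfolding \<phi>_def conv_model_def x0_def A_def by simp
      show ?thesis
        unfolding phi hx gx norm_add_sq Gd_def R_def using gk
        by (simp add: field_simps power2_eq_square)
    qed
    have argmin: "\<phi> v \<le> \<phi> w" for w
      using step[of k] unfolding is_arg_min_def \<phi>_def v_def gk_def by (simp add: not_less)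
    have Gd0: "Gd d = 0" for d
    proof (rule quad_nonneg_zero[OF _ R0])
      fix t show "0 \<le> t * Gd d + t\<^sup>2 * R d"
        using argmin[of "v + t *\<^sub>R d"] expand[of t d] by simp
    qed
    have phi0: "\<phi> 0 = f (u k)"
      unfolding \<phi>_def conv_model_def f_def by simp
    have "\<phi> 0 = \<phi> v + R (- v)"
      using expand[of 1 "- v"] Gd0[of "- v"] by simp
    then have dec1: "\<phi> v + (norm v)\<^sup>2 / (2 * gk) \<le> f (u k)"
      using R_ge[of "- v"] phi0 by simp
    have "f (u (Suc k)) \<le> \<phi> v"
      using suff_decrease[of k] unfolding \<phi>_def v_def gk_def by simp
    then have part1: "(norm v)\<^sup>2 / (2 * gk) \<le> f (u k) - f (u (Suc k))" using dec1 by linarith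
    have part2: "norm (grad_f (u k)) \<le> K k * norm v"
      if nz: "grad_f (u k) \<noteq> 0" and inS: "f (u k) \<le> f (u 0)"
    proof -
      define n where "n = grad_f (u k)"
      have dF: "(f has_derivative (\<lambda>d. n \<bullet> d)) (at (u k))"
        using f_grad unfolding is_gradient_def n_def by blast
      have lip: "ell-lipschitz_on {w. f w \<le> f (u k)} xt"
        by (rule lipschitz_on_subset[OF ell]) (use inS in auto)
      have Ab: "norm (A w) \<le> ell * norm w" for w
        using deriv_bound[OF dF _ xt_deriv[of "u k"] lip] nz unfolding n_def A_def by blast
      have "n \<bullet> n = (grad_h x0 - grad_h (x0 + A v)) \<bullet> A n + (grad_g (u k) - grad_g (u k + v)) \<bullet> n
          - (v \<bullet> n) / gk"
      proof -
        have fn: "n \<bullet> n = grad_h x0 \<bullet> A n + grad_g (u k) \<bullet> n"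
          using fg[of "u k" n] unfolding n_def[symmetric] x0_def A_def .
        show ?thesis using fn Gd0[of n] unfolding Gd_def
          by (simp add: inner_diff_left algebra_simps)
      qed
      also have "\<dots> \<le> Lh * norm (A v) * norm (A n) + Lg * norm v * norm n + norm v * norm n / gk"
      proof -
        have h1: "(grad_h x0 - grad_h (x0 + A v)) \<bullet> A n \<le> norm (grad_h x0 - grad_h (x0 + A v)) * norm (A n)"
          by (rule norm_cauchy_schwarz)
        have h2: "norm (grad_h x0 - grad_h (x0 + A v)) \<le> Lh * norm (A v)"
          using lipschitz_onD[OF Lh, of x0 "x0 + A v"] by (simp add: dist_norm)
        have g1: "(grad_g (u k) - grad_g (u k + v)) \<bullet> n \<le> norm (grad_g (u k) - grad_g (u k + v)) * norm n"
          by (rule norm_cauchy_schwarz)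
        have g2: "norm (grad_g (u k) - grad_g (u k + v)) \<le> Lg * norm v"
          using lipschitz_onD[OF Lg, of "u k" "u k + v"] by (simp add: dist_norm)
        have v1: "- (v \<bullet> n) \<le> norm v * norm n"
          using norm_cauchy_schwarz[of "- v" n] by simp
        have "- (v \<bullet> n) / gk \<le> norm v * norm n / gk" using divide_right_mono[OF v1, of gk] gk by simp
        moreover have "(grad_h x0 - grad_h (x0 + A v)) \<bullet> A n \<le> Lh * norm (A v) * norm (A n)"
          using h1 mult_right_mono[OF h2 norm_ge_zero[of "A n"]] by linarith
        moreover have "(grad_g (u k) - grad_g (u k + v)) \<bullet> n \<le> Lg * norm v * norm n"
          using g1 mult_right_mono[OF g2 norm_ge_zero[of n]] by linarith
        ultimately show ?thesis by simp
      qed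
      also have "\<dots> \<le> Lh * (ell * norm v) * (ell * norm n) + Lg * norm v * norm n + norm v * norm n / gk"
        using Ab[of v] Ab[of n] Lh0 ell0
        by (simp add: mult_mono mult_left_mono)
      also have "\<dots> = K k * norm v * norm n"
        unfolding K_def gk_def by (simp add: algebra_simps power2_eq_square)
      finally have "norm n * norm n \<le> (K k * norm v) * norm n"
        by (simp add: power2_eq_square[symmetric] dot_square_norm)
      moreover have "norm n > 0" using nz n_def by simp
      ultimately show ?thesis unfolding n_def by simp
    qed
    show ?thesis using part1 part2 unfolding v_def gk_def by blast
  qed
  have dec: "decseq (\<lambda>k. f (u k))"
  proof (rule decseq_SucI)
    fix k
    have "0 \<le> (norm (u (Suc k) - u k))\<^sup>2 / (2 * \<gamma> k)"
      using gamma_bounds[of k] gmin_pos by simp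
    then show "f (u (Suc k)) \<le> f (u k)" using core[of k] by linarith
  qed
  define Ls where "Ls = (SUP t\<in>{gmin..gmax}. t * (ell\<^sup>2 * Lh + Lg + 1 / t)\<^sup>2)"
  have bdd: "bdd_above ((\<lambda>t. t * (ell\<^sup>2 * Lh + Lg + 1 / t)\<^sup>2) ` {gmin..gmax})"
  proof -
    have "continuous_on {gmin..gmax} (\<lambda>t. t * (ell\<^sup>2 * Lh + Lg + 1 / t)\<^sup>2)"
      using gmin_pos by (intro continuous_intros) auto
    then have "compact ((\<lambda>t. t * (ell\<^sup>2 * Lh + Lg + 1 / t)\<^sup>2) ` {gmin..gmax})"
      by (rule compact_continuous_image) simp
    then show ?thesis by (intro bounded_imp_bdd_above compact_imp_bounded)
  qed
  have Lk: "\<gamma> k * (K k)\<^sup>2 \<le> Ls" for k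
    unfolding Ls_def K_def
    by (rule cSUP_upper[OF _ bdd, of "\<gamma> k", simplified]) (use gamma_bounds[of k] in auto)
  have gpos: "\<gamma> k > 0" for k using gamma_bounds[of k] gmin_pos by linarith
  have K0: "K k \<ge> 0" for k unfolding K_def using Lh0 Lg0 gpos[of k] by simp
  have Ls0: "Ls \<ge> 0" using Lk[of 0] gpos[of 0] by (meson order_trans zero_le_mult_iff zero_le_power2 less_imp_le)
  have per: "(norm (grad_f (u k)))\<^sup>2 \<le> 2 * Ls * (f (u k) - f (u (Suc k)))" for k
  proof -
    have D0: "f (u (Suc k)) \<le> f (u k)" using decseqD[OF dec, of k "Suc k"] by simp
    show ?thesis
    proof (cases "grad_f (u k) = 0")
      case True then show ?thesis using Ls0 D0 by simp
    next
      case False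
      have inS: "f (u k) \<le> f (u 0)" using decseqD[OF dec, of 0 k] by simp
      have nb: "norm (grad_f (u k)) \<le> K k * norm (u (Suc k) - u k)" using core[of k] False inS by blast
      have "(norm (grad_f (u k)))\<^sup>2 \<le> (K k * norm (u (Suc k) - u k))\<^sup>2"
        by (rule power_mono[OF nb norm_ge_zero])
      also have "\<dots> = (K k)\<^sup>2 * (norm (u (Suc k) - u k))\<^sup>2" by (simp add: power_mult_distrib)
      also have "\<dots> \<le> (K k)\<^sup>2 * (2 * \<gamma> k * (f (u k) - f (u (Suc k))))"
      proof (rule mult_left_mono)
        have "(norm (u (Suc k) - u k))\<^sup>2 / (2 * \<gamma> k) \<le> f (u k) - f (u (Suc k))" using core[of k] by blast
        then show "(norm (u (Suc k) - u k))\<^sup>2 \<le> 2 * \<gamma> k * (f (u k) - f (u (Suc k)))"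
          using gpos[of k] by (simp add: pos_divide_le_eq mult.commute)
      qed simp
      also have "\<dots> = 2 * (\<gamma> k * (K k)\<^sup>2) * (f (u k) - f (u (Suc k)))" by (simp add: algebra_simps)
      also have "\<dots> \<le> 2 * Ls * (f (u k) - f (u (Suc k)))"
        using Lk[of k] D0 by (simp add: mult_right_mono)
      finally show ?thesis .
    qed
  qed
  have main: "Min ((\<lambda>k. (norm (grad_f (u k)))\<^sup>2) ` {0..N}) \<le> 2 * Ls * (f (u 0) - fstar) / (real N + 1)"
    if lim: "(\<lambda>k. f (u k)) \<longlonglongrightarrow> fstar" for fstar N
  proof -
    define m where "m = Min ((\<lambda>k. (norm (grad_f (u k)))\<^sup>2) ` {0..N})"
    have mle: "m \<le> (norm (grad_f (u k)))\<^sup>2" if "k \<in> {0..N}" for k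
      unfolding m_def using that by (intro Min_le) auto
    have "of_nat (card {0..N}) * m \<le> (\<Sum>k\<in>{0..N}. (norm (grad_f (u k)))\<^sup>2)"
      by (rule sum_bounded_below) (rule mle)
    then have s1: "(real N + 1) * m \<le> (\<Sum>k\<in>{0..N}. (norm (grad_f (u k)))\<^sup>2)" by (simp add: add.commute)
    have "(\<Sum>k\<in>{0..N}. (norm (grad_f (u k)))\<^sup>2) \<le> (\<Sum>k\<in>{0..N}. 2 * Ls * (f (u k) - f (u (Suc k))))"
      by (rule sum_mono) (rule per)
    also have "\<dots> = 2 * Ls * (\<Sum>k<Suc N. f (u k) - f (u (Suc k)))"
      by (simp add: sum_distrib_left atLeast0AtMost lessThan_Suc_atMost)
    also have "\<dots> = 2 * Ls * (f (u 0) - f (u (Suc N)))"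
      using sum_lessThan_telescope'[of "\<lambda>k. f (u k)" "Suc N"] by simp
    also have "\<dots> \<le> 2 * Ls * (f (u 0) - fstar)"
      using decseq_ge[OF dec lim, of "Suc N"] Ls0 by (simp add: mult_left_mono)
    finally have "(real N + 1) * m \<le> 2 * Ls * (f (u 0) - fstar)" using s1 by linarith
    then show ?thesis unfolding m_def[symmetric]
      by (simp add: pos_le_divide_eq mult.commute)
  qed
  show ?thesis using dec main unfolding Ls_def by blast
qed

end
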